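(* Consider an ordered linear probing hash table with $n$ slots in some initial state (containing keys and free slots), and a sequence $S$ of insertions and deletions applied to it. For each $s\in[n]$, there exists an interval $P=[r,s-1]$ whose insertion surplus is at least the crossing number $c_s$.
   Context: Ordered linear probing with tombstones: the table has slots $1,\dots,n$ (treated as linearly ordered); each slot holds a key, a tombstone, or is free. A hash function $h$ maps keys to $[n]$; the hash of a tombstone is the hash of the key whose deletion created it. A run is a maximal contiguous sequence of non-free slots; keys and tombstones within each run are stored in order of hash. Deletion of a key replaces it by a tombstone. Insertion of $u$ scans positions $h(u),h(u)+1,\dots$ to find the position $j$ where $u$ belongs in hash order, places $u$ there, and shifts the contents of positions $j,j+1,\dots$ right by one until reaching a tombstone or free slot, which the insertion is said to use (it is overwritten). The peak $p_u$ of an insertion $u$ is the hash of the tombstone it uses, or the position of the free slot it uses. The crossing number $c_i$ is the number of insertions in $S$ with hash smaller than $i$ that either use a tombstone whose hash is at least $i$, or use a free slot in a position at least $i$. A subset $S'\subseteq S_P=\{u\in S:h(u)\in P\}$ is downward-closed if for every $u\in S'$, every $v\in S_P$ occurring temporally before $u$ with $h(v)\ge h(u)$ is in $S'$; its insertion surplus is $\max(0,\ \#\text{insertions in }S' - \#\text{deletions in }S')$. The insertion surplus of an interval $P\subseteq[n]$ is the maximum insertion surplus of a downward-closed subset of $S_P$, minus the number of free slots initially in $P$. *)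

theory Defs
  imports Main
begin

text \<open>A table with slots 1..n is a function from positions to slot contents;
  positions outside 1..n are required to be Free in a well-formed initial state
  and are never touched by the operations.\<close>

datatype 'k slot = Free | Key 'k | Tomb 'k

datatype 'k op = Ins 'k | Del 'k

type_synonym 'k table = "nat \<Rightarrow> 'k slot"

fun opkey :: "'k op \<Rightarrow> 'k" where
  "opkey (Ins u) = u"
| "opkey (Del u) = u"

fun is_ins :: "'k op \<Rightarrow> bool" where
  "is_ins (Ins u) = True"
| "is_ins (Del u) = False"

text \<open>Hash of a non-free slot (key or tombstone); a tombstone has the hash of
  the key whose deletion created it. The value for Free is irrelevant.\<close>
fun shash :: "('k \<Rightarrow> nat) \<Rightarrow> 'k slot \<Rightarrow> nat" where
  "shash h Free = 0"
| "shash h (Key k) = h k"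
| "shash h (Tomb k) = h k"

fun is_key :: "'k slot \<Rightarrow> bool" where
  "is_key (Key k) = True"
| "is_key _ = False"

definition wf_initial :: "nat \<Rightarrow> ('k \<Rightarrow> nat) \<Rightarrow> 'k table \<Rightarrow> bool" where
  "wf_initial n h T \<longleftrightarrow>
     (\<forall>p. p \<notin> {1..n} \<longrightarrow> T p = Free) \<and>
     (\<forall>p k. T p \<noteq> Tomb k) \<and>
     (\<forall>p q k. T p = Key k \<longrightarrow> T q = Key k \<longrightarrow> p = q) \<and>
     (\<forall>p k. T p = Key k \<longrightarrow> h k \<le> p \<and> (\<forall>q\<in>{h k..p}. T q \<noteq> Free)) \<and>
     (\<forall>p q. 1 \<le> p \<longrightarrow> p \<le> q \<longrightarrow> q \<le> n \<longrightarrow> (\<forall>r\<in>{p..q}. T r \<noteq> Free)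
        \<longrightarrow> shash h (T p) \<le> shash h (T q))"

text \<open>Insertion of u: j is the first position \<ge> h u holding a free slot or a
  key/tombstone of hash \<ge> h u (the position where u belongs in hash order);
  k is the first position \<ge> j holding a tombstone or a free slot, which is used.\<close>
definition ins_j :: "nat \<Rightarrow> ('k \<Rightarrow> nat) \<Rightarrow> 'k table \<Rightarrow> 'k \<Rightarrow> nat" where
  "ins_j n h T u = (LEAST p. h u \<le> p \<and> p \<le> n \<and> (T p = Free \<or> h u \<le> shash h (T p)))"

definition ins_k :: "nat \<Rightarrow> 'k table \<Rightarrow> nat \<Rightarrow> nat" where
  "ins_k n T j = (LEAST q. j \<le> q \<and> q \<le> n \<and> \<not> is_key (T q))"

definition step :: "nat \<Rightarrow> ('k \<Rightarrow> nat) \<Rightarrow> 'k table \<Rightarrow> 'k op \<Rightarrow> ('k table \<times> nat option) option" where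
  "step n h T oper =
    (case oper of
       Del u \<Rightarrow>
         (if \<exists>p\<in>{1..n}. T p = Key u
          then Some ((\<lambda>p. if T p = Key u then Tomb u else T p), None)
          else None)
     | Ins u \<Rightarrow>
         (if (\<exists>p. T p = Key u) then None
          else if \<not> (\<exists>p. h u \<le> p \<and> p \<le> n \<and> (T p = Free \<or> h u \<le> shash h (T p))) then None
          else
            let j = ins_j n h T u in
            if \<not> (\<exists>q. j \<le> q \<and> q \<le> n \<and> \<not> is_key (T q)) then None
            else
              let k = ins_k n T j;
                  T' = (\<lambda>p. if p = j then Key u
                             else if j < p \<and> p \<le> k then T (p - 1) else T p);
                  peak = (case T k of Tomb x \<Rightarrow> h x | _ \<Rightarrow> k)
              in Some (T', Some peak)))"

fun run :: "nat \<Rightarrow> ('k \<Rightarrow> nat) \<Rightarrow> 'k table \<Rightarrow> 'k op list \<Rightarrow> nat option list option" where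
  "run n h T [] = Some []"
| "run n h T (oper # os) =
     (case step n h T oper of
        None \<Rightarrow> None
      | Some (T', pk) \<Rightarrow> map_option (Cons pk) (run n h T' os))"

text \<open>Crossing number c_i: insertions with hash < i whose peak is \<ge> i
  (peak = hash of used tombstone, or position of used free slot).\<close>
definition crossing :: "('k \<Rightarrow> nat) \<Rightarrow> 'k op list \<Rightarrow> nat option list \<Rightarrow> nat \<Rightarrow> nat" where
  "crossing h S pks i =
     card {t. t < length S \<and> is_ins (S ! t) \<and> h (opkey (S ! t)) < i \<and>
              (\<exists>p. pks ! t = Some p \<and> i \<le> p)}"

text \<open>Operations of S are identified by their time index t < length S.\<close>
definition S_of :: "('k \<Rightarrow> nat) \<Rightarrow> 'k op list \<Rightarrow> nat set \<Rightarrow> nat set" where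
  "S_of h S P = {t. t < length S \<and> h (opkey (S ! t)) \<in> P}"

definition downward_closed :: "('k \<Rightarrow> nat) \<Rightarrow> 'k op list \<Rightarrow> nat set \<Rightarrow> nat set \<Rightarrow> bool" where
  "downward_closed h S P S' \<longleftrightarrow> S' \<subseteq> S_of h S P \<and>
     (\<forall>u\<in>S'. \<forall>v\<in>S_of h S P. v < u \<longrightarrow> h (opkey (S ! v)) \<ge> h (opkey (S ! u)) \<longrightarrow> v \<in> S')"

definition set_surplus :: "'k op list \<Rightarrow> nat set \<Rightarrow> int" where
  "set_surplus S S' = max 0 (int (card {t\<in>S'. is_ins (S ! t)}) - int (card {t\<in>S'. \<not> is_ins (S ! t)}))"

definition interval_surplus :: "nat \<Rightarrow> ('k \<Rightarrow> nat) \<Rightarrow> 'k table \<Rightarrow> 'k op list \<Rightarrow> nat set \<Rightarrow> int" where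
  "interval_surplus n h T0 S P =
     Max (set_surplus S ` {S'. downward_closed h S P S'})
     - int (card {p\<in>P. p \<in> {1..n} \<and> T0 p = Free})"

end

theory Submission imports Defs begin

locale lp =
  fixes n :: nat and h :: "'k \<Rightarrow> nat"
  assumes hpos: "\<forall>k. 1 \<le> h k"
begin

definition inv :: "'k table \<Rightarrow> bool" where
  "inv T \<longleftrightarrow> (\<forall>p. p \<notin> {1..n} \<longrightarrow> T p = Free) \<and>
    (\<forall>p q k. T p = Key k \<longrightarrow> T q = Key k \<longrightarrow> p = q) \<and>
    (\<forall>p. T p \<noteq> Free \<longrightarrow> shash h (T p) \<le> p \<and> (\<forall>q\<in>{shash h (T p)..p}. T q \<noteq> Free)) \<and>
    (\<forall>p. T p \<noteq> Free \<longrightarrow> T (Suc p) \<noteq> Free \<longrightarrow> shash h (T p) \<le> shash h (T (Suc p)))"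

lemma inv_out: "inv T \<Longrightarrow> p = 0 \<or> n < p \<Longrightarrow> T p = Free"
  unfolding inv_def by auto

lemma inv_distinct: "inv T \<Longrightarrow> T p = Key k \<Longrightarrow> T q = Key k \<Longrightarrow> p = q"
  unfolding inv_def by blast

lemma inv_I1: "inv T \<Longrightarrow> T p \<noteq> Free \<Longrightarrow> shash h (T p) \<le> p"
  unfolding inv_def by blast

lemma inv_I1b: "inv T \<Longrightarrow> T p \<noteq> Free \<Longrightarrow> shash h (T p) \<le> q \<Longrightarrow> q \<le> p \<Longrightarrow> T q \<noteq> Free"
  unfolding inv_def by auto

lemma inv_adj: "inv T \<Longrightarrow> T p \<noteq> Free \<Longrightarrow> T (Suc p) \<noteq> Free \<Longrightarrow> shash h (T p) \<le> shash h (T (Suc p))"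
  unfolding inv_def by blast

lemma inv_sorted:
  assumes "inv T" "p \<le> q" "\<forall>r. p \<le> r \<longrightarrow> r \<le> q \<longrightarrow> T r \<noteq> Free"
  shows "shash h (T p) \<le> shash h (T q)"
  using assms(2,3)
proof (induction q)
  case 0 then show ?case by simp
next
  case (Suc q)
  show ?case
  proof (cases "p = Suc q")
    case True then show ?thesis by simp
  next
    case False
    then have "p \<le> q" using Suc by simp
    then have "shash h (T p) \<le> shash h (T q)" using Suc by simp
    also have "\<dots> \<le> shash h (T (Suc q))"
      using inv_adj[OF assms(1)] Suc.prems \<open>p \<le> q\<close> by simp
    finally show ?thesis .
  qed
qed

lemma inv_initial:
  assumes "wf_initial n h T0" shows "inv T0"
proof -
  have nt: "\<And>p k. T0 p \<noteq> Tomb k" using assms unfolding wf_initial_def by blast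
  have nf: "\<And>p. T0 p \<noteq> Free \<Longrightarrow> \<exists>k. T0 p = Key k"
    using nt by (metis slot.exhaust)
  have out: "\<And>p. p \<notin> {1..n} \<Longrightarrow> T0 p = Free" using assms unfolding wf_initial_def by blast
  have c1: "\<forall>p. p \<notin> {1..n} \<longrightarrow> T0 p = Free" using out by blast
  have c2: "\<forall>p q k. T0 p = Key k \<longrightarrow> T0 q = Key k \<longrightarrow> p = q"
    using assms unfolding wf_initial_def by blast
  have c3: "\<forall>p. T0 p \<noteq> Free \<longrightarrow> shash h (T0 p) \<le> p \<and> (\<forall>q\<in>{shash h (T0 p)..p}. T0 q \<noteq> Free)"
  proof (intro allI impI)
    fix p assume "T0 p \<noteq> Free"
    then obtain k where k: "T0 p = Key k" using nf by blast
    then show "shash h (T0 p) \<le> p \<and> (\<forall>q\<in>{shash h (T0 p)..p}. T0 q \<noteq> Free)"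
      using assms unfolding wf_initial_def by auto
  qed
  have c4: "\<forall>p. T0 p \<noteq> Free \<longrightarrow> T0 (Suc p) \<noteq> Free \<longrightarrow> shash h (T0 p) \<le> shash h (T0 (Suc p))"
  proof (intro allI impI)
    fix p assume a: "T0 p \<noteq> Free" "T0 (Suc p) \<noteq> Free"
    have "1 \<le> p" "Suc p \<le> n" using out[of p] out[of "Suc p"] a by auto
    moreover have "\<forall>r\<in>{p..Suc p}. T0 r \<noteq> Free" using a by (auto simp: le_Suc_eq)
    ultimately show "shash h (T0 p) \<le> shash h (T0 (Suc p))"
      using assms unfolding wf_initial_def by (meson le_SucI le_refl)
  qed
  show ?thesis unfolding inv_def using c1 c2 c3 c4 by blast
qed


lemma step_del:
  assumes "step n h T (Del u) = Some (T', pk)"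
  shows "pk = None" "T' = (\<lambda>p. if T p = Key u then Tomb u else T p)" "\<exists>p\<in>{1..n}. T p = Key u"
  using assms unfolding step_def by (auto split: if_splits)

lemma step_ins:
  assumes "step n h T (Ins u) = Some (T', pk)"
  obtains j k where "h u \<le> j" "j \<le> k" "k \<le> n"
    "\<forall>p. h u \<le> p \<longrightarrow> p < j \<longrightarrow> T p \<noteq> Free \<and> shash h (T p) < h u"
    "T j = Free \<or> h u \<le> shash h (T j)"
    "\<forall>q. j \<le> q \<longrightarrow> q < k \<longrightarrow> is_key (T q)" "\<not> is_key (T k)"
    "T' = (\<lambda>p. if p = j then Key u else if j < p \<and> p \<le> k then T (p - 1) else T p)"
    "pk = Some (case T k of Tomb x \<Rightarrow> h x | _ \<Rightarrow> k)" "\<forall>p. T p \<noteq> Key u"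
proof -
  have nk: "\<forall>p. T p \<noteq> Key u" and ex1: "\<exists>p. h u \<le> p \<and> p \<le> n \<and> (T p = Free \<or> h u \<le> shash h (T p))"
    using assms unfolding step_def by (auto split: if_splits)
  define j where "j = ins_j n h T u"
  have j: "h u \<le> j \<and> j \<le> n \<and> (T j = Free \<or> h u \<le> shash h (T j))"
    unfolding j_def ins_j_def by (rule LeastI_ex[OF ex1])
  have jl: "\<forall>p. h u \<le> p \<longrightarrow> p < j \<longrightarrow> T p \<noteq> Free \<and> shash h (T p) < h u"
  proof (intro allI impI)
    fix p assume "h u \<le> p" "p < j"
    then have "\<not> (h u \<le> p \<and> p \<le> n \<and> (T p = Free \<or> h u \<le> shash h (T p)))"
      using not_less_Least[of p "\<lambda>p. h u \<le> p \<and> p \<le> n \<and> (T p = Free \<or> h u \<le> shash h (T p))"]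
      unfolding j_def ins_j_def by blast
    then show "T p \<noteq> Free \<and> shash h (T p) < h u" using \<open>h u \<le> p\<close> \<open>p < j\<close> j by auto
  qed
  have ex2: "\<exists>q. j \<le> q \<and> q \<le> n \<and> \<not> is_key (T q)"
    using assms nk ex1 unfolding step_def j_def by (auto split: if_splits simp: Let_def)
  define k where "k = ins_k n T j"
  have k: "j \<le> k \<and> k \<le> n \<and> \<not> is_key (T k)"
    unfolding k_def ins_k_def by (rule LeastI_ex[OF ex2])
  have kl: "\<forall>q. j \<le> q \<longrightarrow> q < k \<longrightarrow> is_key (T q)"
  proof (intro allI impI)
    fix q assume "j \<le> q" "q < k"
    then have "\<not> (j \<le> q \<and> q \<le> n \<and> \<not> is_key (T q))"
      using not_less_Least[of q "\<lambda>q. j \<le> q \<and> q \<le> n \<and> \<not> is_key (T q)"]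
      unfolding k_def ins_k_def by blast
    then show "is_key (T q)" using \<open>j \<le> q\<close> \<open>q < k\<close> k by auto
  qed
  have eq: "Some (T', pk) = Some ((\<lambda>p. if p = j then Key u else if j < p \<and> p \<le> k then T (p - 1) else T p),
        Some (case T k of Tomb x \<Rightarrow> h x | _ \<Rightarrow> k))"
    using assms[symmetric] nk ex1 ex2 unfolding step_def j_def k_def
    by (auto simp add: Let_def)
  show ?thesis
    apply (rule that[of j k])
    using j k jl kl eq nk by auto
qed


lemma is_key_nf: "is_key x \<Longrightarrow> x \<noteq> Free" by (cases x) auto

lemma inv_ins:
  assumes I: "inv T" and st: "step n h T (Ins u) = Some (T', pk)"
  shows "inv T'"
proof -
  obtain j k where j1: "h u \<le> j" and jk: "j \<le> k" and kn: "k \<le> n"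
    and jl: "\<forall>p. h u \<le> p \<longrightarrow> p < j \<longrightarrow> T p \<noteq> Free \<and> shash h (T p) < h u"
    and jj: "T j = Free \<or> h u \<le> shash h (T j)"
    and kl: "\<forall>q. j \<le> q \<longrightarrow> q < k \<longrightarrow> is_key (T q)" and kk: "\<not> is_key (T k)"
    and T'd: "T' = (\<lambda>p. if p = j then Key u else if j < p \<and> p \<le> k then T (p - 1) else T p)"
    and pkd: "pk = Some (case T k of Tomb x \<Rightarrow> h x | _ \<Rightarrow> k)"
    and nk: "\<forall>p. T p \<noteq> Key u"
    by (rule step_ins[OF st])
  have hu: "1 \<le> h u" using hpos by blast
  have T'p: "\<And>p. T' p = (if p = j then Key u else if j < p \<and> p \<le> k then T (p - 1) else T p)"
    using T'd by simp
  have klnf: "\<And>q. j \<le> q \<Longrightarrow> q < k \<Longrightarrow> T q \<noteq> Free" using kl is_key_nf by blast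
  have nf': "T' p \<noteq> Free \<longleftrightarrow> T p \<noteq> Free \<or> p = k" for p
  proof -
    consider "p = j" | "j < p \<and> p \<le> k" | "p \<noteq> j \<and> \<not> (j < p \<and> p \<le> k)" by blast
    then show ?thesis
    proof cases
      case 1
      then show ?thesis using T'p[of p] klnf[of p] jk by (cases "p = k") auto
    next
      case 2
      then have "j \<le> p - 1" "p - 1 < k" by auto
      then have "T (p - 1) \<noteq> Free" using klnf by blast
      moreover have "T p \<noteq> Free \<or> p = k" using klnf[of p] 2 by (cases "p = k") auto
      ultimately show ?thesis using T'p[of p] 2 by auto
    next
      case 3
      then have "p \<noteq> k" using jk by auto
      then show ?thesis using T'p[of p] 3 by auto
    qed
  qed
  have c1: "\<forall>p. p \<notin> {1..n} \<longrightarrow> T' p = Free"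
  proof (intro allI impI)
    fix p assume p: "p \<notin> {1..n}"
    then have "p = 0 \<or> n < p" by auto
    then show "T' p = Free" unfolding T'p using inv_out[OF I] j1 hu jk kn by auto
  qed
  have c2: "\<forall>p q k'. T' p = Key k' \<longrightarrow> T' q = Key k' \<longrightarrow> p = q"
  proof (intro allI impI)
    fix p q k' assume a: "T' p = Key k'" "T' q = Key k'"
    define src where "src p = (if j < p \<and> p \<le> k then p - 1 else p)" for p
    have srcT: "\<And>p. p \<noteq> j \<Longrightarrow> T' p = T (src p)" unfolding T'p src_def by auto
    show "p = q"
    proof (cases "p = j \<or> q = j")
      case True
      then show ?thesis using a srcT nk T'p by (metis slot.inject(1))
    next
      case False
      then have "T (src p) = Key k'" "T (src q) = Key k'" using a srcT by auto
      then have "src p = src q" using inv_distinct[OF I] by blast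
      then show ?thesis using False unfolding src_def by (auto split: if_splits)
    qed
  qed
  have c3: "\<forall>p. T' p \<noteq> Free \<longrightarrow> shash h (T' p) \<le> p \<and> (\<forall>q\<in>{shash h (T' p)..p}. T' q \<noteq> Free)"
  proof (intro allI impI)
    fix p assume a: "T' p \<noteq> Free"
    show "shash h (T' p) \<le> p \<and> (\<forall>q\<in>{shash h (T' p)..p}. T' q \<noteq> Free)"
    proof (cases "p = j")
      case True
      have "\<forall>q\<in>{h u..j}. T' q \<noteq> Free"
      proof
        fix q assume "q \<in> {h u..j}"
        then show "T' q \<noteq> Free" using jl nf' T'p[of j] by (cases "q = j") auto
      qed
      then show ?thesis using True T'p[of j] j1 by simp
    next
      case pj: False
      show ?thesis
      proof (cases "j < p \<and> p \<le> k")
        case True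
        then have e: "T' p = T (p - 1)" using pj by (simp add: T'p)
        have nf: "T (p - 1) \<noteq> Free" using True by (intro klnf) auto
        have "shash h (T (p - 1)) \<le> p - 1" using inv_I1[OF I nf] .
        moreover have "\<forall>q\<in>{shash h (T (p - 1))..p}. T' q \<noteq> Free"
        proof
          fix q assume q: "q \<in> {shash h (T (p - 1))..p}"
          show "T' q \<noteq> Free"
          proof (cases "q = p")
            case True then show ?thesis using a by simp
          next
            case False
            then have "q \<le> p - 1" using q by auto
            then have "T q \<noteq> Free" using inv_I1b[OF I nf, of q] q by auto
            then show ?thesis using nf' by blast
          qed
        qed
        ultimately show ?thesis using e by simp
      next
        case False
        then have e: "T' p = T p" using pj by (auto simp: T'p)
        have pk: "p \<noteq> k" using False pj jk by auto
        have nf: "T p \<noteq> Free" using a nf' pk by blast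
        show ?thesis using inv_I1[OF I nf] inv_I1b[OF I nf] nf' e by auto
      qed
    qed
  qed
  have freeR: "\<And>q. T q = Free \<Longrightarrow> T (Suc q) \<noteq> Free \<Longrightarrow> shash h (T (Suc q)) \<ge> Suc q"
  proof (rule ccontr)
    fix q assume a: "T q = Free" "T (Suc q) \<noteq> Free" "\<not> shash h (T (Suc q)) \<ge> Suc q"
    then show False using inv_I1b[OF I a(2), of q] by auto
  qed
  have c4: "\<forall>p. T' p \<noteq> Free \<longrightarrow> T' (Suc p) \<noteq> Free \<longrightarrow> shash h (T' p) \<le> shash h (T' (Suc p))"
  proof (intro allI impI)
    fix p assume a: "T' p \<noteq> Free" "T' (Suc p) \<noteq> Free"
    consider "Suc p < j" | "Suc p = j" | "p = j" | "j < p \<and> Suc p \<le> k" | "p = k \<and> j < k" | "k < p"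
      by linarith
    then show "shash h (T' p) \<le> shash h (T' (Suc p))"
    proof cases
      case 1
      then show ?thesis using a nf' jk inv_adj[OF I, of p] by (auto simp: T'p)
    next
      case 2
      then have e: "T' p = T p" "T' (Suc p) = Key u" by (auto simp: T'p)
      have nfp: "T p \<noteq> Free" using a nf' 2 jk by auto
      have "shash h (T p) < h u"
      proof (cases "h u \<le> p")
        case True then show ?thesis using jl 2 by auto
      next
        case False then show ?thesis using inv_I1[OF I nfp] by auto
      qed
      then show ?thesis using e by simp
    next
      case 3
      show ?thesis
      proof (cases "j < k")
        case True
        then have e: "T' p = Key u" "T' (Suc p) = T j" using 3 by (auto simp: T'p)
        have "T j \<noteq> Free" using klnf True by auto
        then show ?thesis using e jj by simp
      next
        case False
        then have kj: "k = j" using jk by simp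
        then have e: "T' p = Key u" "T' (Suc p) = T (Suc j)" using 3 by (auto simp: T'p)
        have nfs: "T (Suc j) \<noteq> Free" using a nf' 3 kj by auto
        show ?thesis
        proof (cases "T j = Free")
          case True
          then show ?thesis using freeR[OF True nfs] e j1 3 by simp
        next
          case False
          then show ?thesis using jj inv_adj[OF I False nfs] e by simp
        qed
      qed
    next
      case 4
      then have e: "T' p = T (p - 1)" "T' (Suc p) = T p" by (auto simp: T'p)
      have "T (p - 1) \<noteq> Free" "T p \<noteq> Free" using klnf 4 by auto
      then show ?thesis using inv_adj[OF I, of "p - 1"] e 4 by auto
    next
      case 5
      then have e: "T' p = T (k - 1)" "T' (Suc p) = T (Suc k)" by (auto simp: T'p)
      have nfa: "T (k - 1) \<noteq> Free" using klnf 5 by auto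
      have nfs: "T (Suc k) \<noteq> Free" using a nf' 5 by auto
      have le1: "shash h (T (k - 1)) \<le> k - 1" using inv_I1[OF I nfa] .
      show ?thesis
      proof (cases "T k = Free")
        case True
        then show ?thesis using freeR[OF True nfs] e le1 5 by simp
      next
        case False
        have "shash h (T (k - 1)) \<le> shash h (T k)" using inv_adj[OF I nfa] False 5 by auto
        then show ?thesis using inv_adj[OF I False nfs] e 5 by simp
      qed
    next
      case 6
      then show ?thesis using a nf' jk inv_adj[OF I, of p] by (auto simp: T'p)
    qed
  qed
  show ?thesis unfolding inv_def using c1 c2 c3 c4 by blast
qed

lemma inv_del:
  assumes I: "inv T" and st: "step n h T (Del u) = Some (T', pk)"
  shows "inv T'"
proof -
  have T'p: "\<And>p. T' p = (if T p = Key u then Tomb u else T p)" using step_del(2)[OF st] by simp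
  have nf: "\<And>p. T' p \<noteq> Free \<longleftrightarrow> T p \<noteq> Free" unfolding T'p by auto
  have sh: "\<And>p. shash h (T' p) = shash h (T p)" unfolding T'p by auto
  have c2: "\<forall>p q k'. T' p = Key k' \<longrightarrow> T' q = Key k' \<longrightarrow> p = q"
    unfolding T'p using inv_distinct[OF I] by (auto split: if_splits)
  have nf2: "\<And>p. T' p = Free \<longleftrightarrow> T p = Free" using nf by blast
  show ?thesis using I c2 unfolding inv_def by (simp add: nf2 sh)
qed

lemma inv_step: "inv T \<Longrightarrow> step n h T oper = Some (T', pk) \<Longrightarrow> inv T'"
  by (cases oper) (auto intro: inv_ins inv_del)


lemma card_as_sum: "card {p. p \<le> m \<and> Q p} = (\<Sum>p\<in>{0..<Suc m}. of_bool (Q p) :: nat)"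
proof -
  have "(\<Sum>p\<in>{0..<Suc m}. of_bool (Q p) :: nat) = of_nat (card ({0..<Suc m} \<inter> {x. Q x}))"
    by (rule sum_of_bool_eq) auto
  also have "{0..<Suc m} \<inter> {x. Q x} = {p. p \<le> m \<and> Q p}" by auto
  finally show ?thesis by simp
qed

lemma shift_card:
  fixes T T' :: "'k table" and j k m :: nat
  assumes jk: "j \<le> k" and kn: "k \<le> m"
    and T'd: "T' = (\<lambda>p. if p = j then v else if j < p \<and> p \<le> k then T (p - 1) else T p)"
  shows "card {p. p \<le> m \<and> P (T' p)} + of_bool (P (T k)) = card {p. p \<le> m \<and> P (T p)} + of_bool (P v)"
proof -
  define f' where "f' p = (of_bool (P (T' p)) :: nat)" for p
  define f where "f p = (of_bool (P (T p)) :: nat)" for p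
  have split: "\<And>g::nat\<Rightarrow>nat. sum g {0..<Suc m} = sum g {0..<j} + sum g {j..<Suc k} + sum g {Suc k..<Suc m}"
    using jk kn by (metis le_SucI not_less_eq_eq sum.atLeastLessThan_concat zero_le)
  have a1: "sum f' {0..<j} = sum f {0..<j}" by (rule sum.cong) (use jk in \<open>auto simp: f'_def f_def T'd\<close>)
  have a3: "sum f' {Suc k..<Suc m} = sum f {Suc k..<Suc m}" by (rule sum.cong) (use jk in \<open>auto simp: f'_def f_def T'd\<close>)
  have "sum f' {j..<Suc k} = f' j + sum f' {Suc j..<Suc k}"
    using jk by (intro sum.atLeast_Suc_lessThan) simp
  also have "sum f' {Suc j..<Suc k} = (\<Sum>i = j..<k. f' (Suc i))" by (rule sum.shift_bounds_Suc_ivl)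
  also have "\<dots> = sum f {j..<k}" by (rule sum.cong) (use jk in \<open>auto simp: f'_def f_def T'd\<close>)
  finally have a2: "sum f' {j..<Suc k} = of_bool (P v) + sum f {j..<k}" by (simp add: f'_def T'd)
  have b2: "sum f {j..<Suc k} = sum f {j..<k} + of_bool (P (T k))"
    using jk by (simp add: f_def)
  show ?thesis
    unfolding card_as_sum using split[of f'] split[of f] a1 a2 a3 b2
    unfolding f'_def[symmetric] f_def[symmetric] by simp
qed


definition Xc :: "nat \<Rightarrow> 'k table \<Rightarrow> nat" where
  "Xc s T = card {p. p \<le> n \<and> s \<le> p \<and> T p \<noteq> Free \<and> shash h (T p) < s}"
definition NFc :: "nat \<Rightarrow> 'k table \<Rightarrow> nat" where
  "NFc s T = card {p. p \<le> n \<and> p < s \<and> T p \<noteq> Free}"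
definition Nc :: "nat \<Rightarrow> 'k table \<Rightarrow> nat" where
  "Nc s T = card {p. p \<le> n \<and> T p \<noteq> Free \<and> shash h (T p) < s}"
definition Kc :: "nat \<Rightarrow> 'k table \<Rightarrow> nat" where
  "Kc x T = card {p. p \<le> n \<and> is_key (T p) \<and> shash h (T p) = x}"

definition cross :: "nat \<Rightarrow> 'k op \<Rightarrow> nat option \<Rightarrow> bool" where
  "cross s oper pk \<longleftrightarrow> is_ins oper \<and> h (opkey oper) < s \<and> (\<exists>p. pk = Some p \<and> s \<le> p)"

lemma X_NF_N: assumes I: "inv T" shows "Xc s T + NFc s T = Nc s T"
proof -
  have "{p. p \<le> n \<and> T p \<noteq> Free \<and> shash h (T p) < s} =
        {p. p \<le> n \<and> s \<le> p \<and> T p \<noteq> Free \<and> shash h (T p) < s} \<union> {p. p \<le> n \<and> p < s \<and> T p \<noteq> Free}"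
    using inv_I1[OF I] by fastforce
  moreover have "card (\<dots>) = Xc s T + NFc s T"
    unfolding Xc_def NFc_def by (rule card_Un_disjoint) auto
  ultimately show ?thesis unfolding Nc_def by simp
qed

lemma shift_nf:
  fixes T T' :: "'k table"
  assumes jk: "j \<le> k" and kl: "\<forall>q. j \<le> q \<longrightarrow> q < k \<longrightarrow> is_key (T q)"
    and T'd: "T' = (\<lambda>p. if p = j then Key u else if j < p \<and> p \<le> k then T (p - 1) else T p)"
  shows "T' p \<noteq> Free \<longleftrightarrow> T p \<noteq> Free \<or> p = k"
proof -
  have klnf: "\<And>q. j \<le> q \<Longrightarrow> q < k \<Longrightarrow> T q \<noteq> Free" using kl is_key_nf by blast
  have T'p: "T' p = (if p = j then Key u else if j < p \<and> p \<le> k then T (p - 1) else T p)" using T'd by simp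
  consider "p = j" | "j < p \<and> p \<le> k" | "p \<noteq> j \<and> \<not> (j < p \<and> p \<le> k)" by blast
  then show ?thesis
  proof cases
    case 1
    then show ?thesis using T'p klnf[of p] jk by (cases "p = k") auto
  next
    case 2
    then have "j \<le> p - 1" "p - 1 < k" by auto
    then have "T (p - 1) \<noteq> Free" using klnf by blast
    moreover have "T p \<noteq> Free \<or> p = k" using klnf[of p] 2 by (cases "p = k") auto
    ultimately show ?thesis using T'p 2 by auto
  next
    case 3
    then have "p \<noteq> k" using jk by auto
    then show ?thesis using T'p 3 by auto
  qed
qed

lemma X_step:
  assumes I: "inv T" and st: "step n h T oper = Some (T', pk)"
  shows "Xc s T' = Xc s T + of_bool (cross s oper pk)"
proof (cases oper)
  case (Del u)
  then have st': "step n h T (Del u) = Some (T', pk)" using st by simp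
  have T'p: "\<And>p. T' p = (if T p = Key u then Tomb u else T p)" using step_del(2)[OF st'] by simp
  have "{p. p \<le> n \<and> s \<le> p \<and> T' p \<noteq> Free \<and> shash h (T' p) < s} = {p. p \<le> n \<and> s \<le> p \<and> T p \<noteq> Free \<and> shash h (T p) < s}"
    by (auto simp: T'p)
  then show ?thesis unfolding Xc_def cross_def using Del by simp
next
  case (Ins u)
  then have st': "step n h T (Ins u) = Some (T', pk)" using st by simp
  obtain j k where j1: "h u \<le> j" and jk: "j \<le> k" and kn: "k \<le> n"
    and jl: "\<forall>p. h u \<le> p \<longrightarrow> p < j \<longrightarrow> T p \<noteq> Free \<and> shash h (T p) < h u"
    and jj: "T j = Free \<or> h u \<le> shash h (T j)"
    and kl: "\<forall>q. j \<le> q \<longrightarrow> q < k \<longrightarrow> is_key (T q)" and kk: "\<not> is_key (T k)"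
    and T'd: "T' = (\<lambda>p. if p = j then Key u else if j < p \<and> p \<le> k then T (p - 1) else T p)"
    and pkd: "pk = Some (case T k of Tomb x \<Rightarrow> h x | _ \<Rightarrow> k)"
    and nk: "\<forall>p. T p \<noteq> Key u"
    by (rule step_ins[OF st'])
  have I': "inv T'" using inv_step[OF I st] .
  have nf': "\<And>p. T' p \<noteq> Free \<longleftrightarrow> T p \<noteq> Free \<or> p = k" using shift_nf[OF jk kl T'd] .
  have NF': "NFc s T' = NFc s T + of_bool (T k = Free \<and> k < s)"
  proof (cases "T k = Free \<and> k < s")
    case True
    have "{p. p \<le> n \<and> p < s \<and> T' p \<noteq> Free} = insert k {p. p \<le> n \<and> p < s \<and> T p \<noteq> Free}"
      using nf' True kn by auto
    then show ?thesis unfolding NFc_def using True by simp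
  next
    case False
    have "{p. p \<le> n \<and> p < s \<and> T' p \<noteq> Free} = {p. p \<le> n \<and> p < s \<and> T p \<noteq> Free}"
      using nf' False kn by auto
    then show ?thesis unfolding NFc_def using False by simp
  qed
  have N': "Nc s T' + of_bool (T k \<noteq> Free \<and> shash h (T k) < s) = Nc s T + of_bool (h u < s)"
    unfolding Nc_def using shift_card[OF jk kn T'd, of "\<lambda>x. x \<noteq> Free \<and> shash h x < s"] by simp
  have e1: "Xc s T' + NFc s T' = Nc s T'" using X_NF_N[OF I'] .
  have e2: "Xc s T + NFc s T = Nc s T" using X_NF_N[OF I] .
  show ?thesis
  proof (cases "T k")
    case Free
    have "cross s oper pk \<longleftrightarrow> h u < s \<and> s \<le> k" unfolding cross_def using Ins pkd Free by simp
    then show ?thesis using NF' N' e1 e2 Free j1 jk by auto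
  next
    case (Key x) then show ?thesis using kk by simp
  next
    case (Tomb w)
    have nfk: "T k \<noteq> Free" using Tomb by simp
    have hw: "h u \<le> h w"
    proof (cases "j = k")
      case True then show ?thesis using jj Tomb by simp
    next
      case False
      then have "T j \<noteq> Free" using kl jk is_key_nf by auto
      then have "h u \<le> shash h (T j)" using jj by simp
      also have "\<dots> \<le> shash h (T k)"
      proof (rule inv_sorted[OF I jk], intro allI impI)
        fix r assume "j \<le> r" "r \<le> k"
        then show "T r \<noteq> Free" using kl is_key_nf nfk by (cases "r = k") auto
      qed
      finally show ?thesis using Tomb by simp
    qed
    have "cross s oper pk \<longleftrightarrow> h u < s \<and> s \<le> h w" unfolding cross_def using Ins pkd Tomb by simp
    then show ?thesis using NF' N' e1 e2 Tomb hw by auto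
  qed
qed

lemma K_step:
  assumes I: "inv T" and st: "step n h T oper = Some (T', pk)"
  shows "int (Kc x T') = int (Kc x T) + (if h (opkey oper) = x then (if is_ins oper then 1 else -1) else 0)"
proof (cases oper)
  case (Ins u)
  then have st': "step n h T (Ins u) = Some (T', pk)" using st by simp
  obtain j k where j1: "h u \<le> j" and jk: "j \<le> k" and kn: "k \<le> n"
    and jl: "\<forall>p. h u \<le> p \<longrightarrow> p < j \<longrightarrow> T p \<noteq> Free \<and> shash h (T p) < h u"
    and jj: "T j = Free \<or> h u \<le> shash h (T j)"
    and kl: "\<forall>q. j \<le> q \<longrightarrow> q < k \<longrightarrow> is_key (T q)" and kk: "\<not> is_key (T k)"
    and T'd: "T' = (\<lambda>p. if p = j then Key u else if j < p \<and> p \<le> k then T (p - 1) else T p)"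
    and pkd: "pk = Some (case T k of Tomb x \<Rightarrow> h x | _ \<Rightarrow> k)"
    and nk: "\<forall>p. T p \<noteq> Key u"
    by (rule step_ins[OF st'])
  have "Kc x T' = Kc x T + of_bool (h u = x)"
    unfolding Kc_def using shift_card[OF jk kn T'd, of "\<lambda>sl. is_key sl \<and> shash h sl = x"] kk by simp
  then show ?thesis using Ins by auto
next
  case (Del u)
  then have st': "step n h T (Del u) = Some (T', pk)" using st by simp
  have T'p: "\<And>p. T' p = (if T p = Key u then Tomb u else T p)" using step_del(2)[OF st'] by simp
  obtain p0 where p0: "p0 \<in> {1..n}" "T p0 = Key u" using step_del(3)[OF st'] by blast
  have uniq: "\<And>p. T p = Key u \<Longrightarrow> p = p0" using inv_distinct[OF I] p0 by blast
  have pw: "(is_key (T p) \<and> shash h (T p) = x) \<longleftrightarrow> (is_key (T' p) \<and> shash h (T' p) = x) \<or> (p = p0 \<and> h u = x)" for p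
  proof (cases "p = p0")
    case True then show ?thesis using p0 by (simp add: T'p)
  next
    case False
    then have "T p \<noteq> Key u" using uniq by blast
    then show ?thesis using False by (simp add: T'p)
  qed
  have nk0: "\<not> is_key (T' p0)" using p0 by (simp add: T'p)
  have "Kc x T = Kc x T' + of_bool (h u = x)"
  proof (cases "h u = x")
    case True
    have "{p. p \<le> n \<and> is_key (T p) \<and> shash h (T p) = x} = insert p0 {p. p \<le> n \<and> is_key (T' p) \<and> shash h (T' p) = x}"
      using pw p0 True by auto
    then show ?thesis unfolding Kc_def using True nk0 by simp
  next
    case False
    have "{p. p \<le> n \<and> is_key (T p) \<and> shash h (T p) = x} = {p. p \<le> n \<and> is_key (T' p) \<and> shash h (T' p) = x}"
      using pw False by auto
    then show ?thesis unfolding Kc_def using False by simp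
  qed
  then show ?thesis using Del by auto
qed


end

fun tbl :: "nat \<Rightarrow> ('k \<Rightarrow> nat) \<Rightarrow> 'k table \<Rightarrow> 'k op list \<Rightarrow> nat \<Rightarrow> 'k table" where
  "tbl n h T [] t = T"
| "tbl n h T (oper # os) 0 = T"
| "tbl n h T (oper # os) (Suc t) = tbl n h (fst (the (step n h T oper))) os t"

lemma tbl_zero: "tbl n h T S 0 = T" by (cases S) auto

lemma run_props:
  "run n h T S = Some pks \<Longrightarrow> length pks = length S \<and>
     (\<forall>t < length S. step n h (tbl n h T S t) (S ! t) = Some (tbl n h T S (Suc t), pks ! t))"
proof (induction S arbitrary: T pks)
  case Nil then show ?case by simp
next
  case (Cons oper os)
  obtain T' pk where st: "step n h T oper = Some (T', pk)"
    using Cons.prems by (auto split: option.splits)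
  obtain pks' where r: "run n h T' os = Some pks'" and pe: "pks = pk # pks'"
    using Cons.prems st by (auto split: option.splits)
  have IH: "length pks' = length os \<and>
     (\<forall>t < length os. step n h (tbl n h T' os t) (os ! t) = Some (tbl n h T' os (Suc t), pks' ! t))"
    using Cons.IH[OF r] .
  show ?case
  proof (intro conjI allI impI)
    show "length pks = length (oper # os)" using IH pe by simp
  next
    fix t assume t: "t < length (oper # os)"
    show "step n h (tbl n h T (oper # os) t) ((oper # os) ! t) = Some (tbl n h T (oper # os) (Suc t), pks ! t)"
    proof (cases t)
      case 0 then show ?thesis using st pe by (simp add: tbl_zero)
    next
      case (Suc t') then show ?thesis using IH t st pe by simp
    qed
  qed
qed

locale lpr = lp n h for n :: nat and h :: "'k \<Rightarrow> nat" +
  fixes T0 :: "'k table" and S :: "'k op list" and pks :: "nat option list"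
  assumes init: "wf_initial n h T0" and exec: "run n h T0 S = Some pks"
begin

abbreviation st :: "nat \<Rightarrow> 'k table" where "st t \<equiv> tbl n h T0 S t"

lemma len_pks: "length pks = length S" using run_props[OF exec] by blast

lemma st_step: "t < length S \<Longrightarrow> step n h (st t) (S ! t) = Some (st (Suc t), pks ! t)"
  using run_props[OF exec] by blast

lemma st0: "st 0 = T0" by (simp add: tbl_zero)

lemma inv_st: "t \<le> length S \<Longrightarrow> inv (st t)"
proof (induction t)
  case 0 then show ?case using inv_initial[OF init] st0 by simp
next
  case (Suc t) then show ?case using inv_step[OF _ st_step[of t]] by simp
qed

lemma X_acc: "t \<le> length S \<Longrightarrow> Xc s (st t) = Xc s T0 + card {v. v < t \<and> cross s (S ! v) (pks ! v)}"
proof (induction t)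
  case 0 then show ?case using st0 by simp
next
  case (Suc t)
  have e: "{v. v < Suc t \<and> cross s (S ! v) (pks ! v)} =
      {v. v < t \<and> cross s (S ! v) (pks ! v)} \<union> (if cross s (S ! t) (pks ! t) then {t} else {})"
    by (auto simp: less_Suc_eq)
  have "Xc s (st (Suc t)) = Xc s (st t) + of_bool (cross s (S ! t) (pks ! t))"
    using X_step[OF inv_st st_step] Suc.prems by simp
  then show ?case using Suc e by (auto simp: card_Un_disjoint)
qed

definition dlt :: "nat \<Rightarrow> nat \<Rightarrow> int" where
  "dlt x v = (if h (opkey (S ! v)) = x then (if is_ins (S ! v) then 1 else -1) else 0)"

lemma K_acc: "t \<le> length S \<Longrightarrow> int (Kc x (st t)) = int (Kc x T0) + (\<Sum>v<t. dlt x v)"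
proof (induction t)
  case 0 then show ?case using st0 by simp
next
  case (Suc t)
  have "int (Kc x (st (Suc t))) = int (Kc x (st t)) + dlt x t"
    using K_step[OF inv_st st_step] Suc.prems unfolding dlt_def by simp
  then show ?case using Suc by simp
qed


lemma Ksum: "finite A \<Longrightarrow> (\<Sum>x\<in>A. Kc x T) = card {p. p \<le> n \<and> is_key (T p) \<and> shash h (T p) \<in> A}"
proof -
  assume fA: "finite A"
  let ?S = "{p. p \<le> n \<and> is_key (T p) \<and> shash h (T p) \<in> A}"
  have "(\<Sum>y\<in>A. sum (\<lambda>_. 1::nat) {p \<in> ?S. shash h (T p) = y}) = sum (\<lambda>_. 1) ?S"
    by (rule sum.group) (use fA in auto)
  moreover have "\<And>y. y \<in> A \<Longrightarrow> {p \<in> ?S. shash h (T p) = y} = {p. p \<le> n \<and> is_key (T p) \<and> shash h (T p) = y}"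
    by auto
  ultimately show ?thesis unfolding Kc_def by simp
qed

lemma finite_le_n: "finite {p. p \<le> (m::nat) \<and> Q p}" by simp

lemma claim_base:
  assumes s1: "1 \<le> s"
  shows "\<exists>r. 1 \<le> r \<and> r \<le> s \<and> (s - r) + Xc s T0 \<le> (\<Sum>x\<in>{r..<s}. Kc x T0)"
proof -
  have I: "inv T0" using inv_initial[OF init] .
  have nt: "\<And>p k. T0 p \<noteq> Tomb k" using init unfolding wf_initial_def by blast
  have nfkey: "\<And>p. T0 p \<noteq> Free \<Longrightarrow> is_key (T0 p)" using nt by (metis is_key.simps(1) slot.exhaust)
  define a where "a = (LEAST a. \<forall>q. a \<le> q \<longrightarrow> q < s \<longrightarrow> T0 q \<noteq> Free)"
  have aP: "\<forall>q. a \<le> q \<longrightarrow> q < s \<longrightarrow> T0 q \<noteq> Free"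
    unfolding a_def by (rule LeastI[of _ s]) auto
  have as: "a \<le> s" unfolding a_def by (rule Least_le) auto
  have a1: "1 \<le> a"
  proof (rule ccontr)
    assume "\<not> 1 \<le> a" then have "a = 0" by simp
    then have "T0 0 \<noteq> Free" using aP s1 by auto
    then show False using inv_out[OF I] by auto
  qed
  have afree: "T0 (a - 1) = Free"
  proof (rule ccontr)
    assume c: "T0 (a - 1) \<noteq> Free"
    have "\<forall>q. a - 1 \<le> q \<longrightarrow> q < s \<longrightarrow> T0 q \<noteq> Free"
    proof (intro allI impI)
      fix q assume "a - 1 \<le> q" "q < s"
      then show "T0 q \<noteq> Free" using c aP by (cases "q = a - 1") auto
    qed
    then have "a \<le> a - 1" unfolding a_def by (rule Least_le)
    then show False using a1 by simp
  qed
  have shge: "\<And>p. a \<le> p \<Longrightarrow> T0 p \<noteq> Free \<Longrightarrow> a \<le> shash h (T0 p)"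
  proof (rule ccontr)
    fix p assume "a \<le> p" "T0 p \<noteq> Free" "\<not> a \<le> shash h (T0 p)"
    then have "T0 (a - 1) \<noteq> Free" using inv_I1b[OF I, of p "a - 1"] by auto
    then show False using afree by simp
  qed
  let ?KS = "{p. p \<le> n \<and> is_key (T0 p) \<and> shash h (T0 p) \<in> {a..<s}}"
  let ?XS = "{p. p \<le> n \<and> s \<le> p \<and> T0 p \<noteq> Free \<and> shash h (T0 p) < s}"
  have sub: "{a..<s} \<union> ?XS \<subseteq> ?KS"
  proof
    fix p assume p: "p \<in> {a..<s} \<union> ?XS"
    then have nf: "T0 p \<noteq> Free" using aP by auto
    then have pn: "p \<le> n" using inv_out[OF I, of p] by (cases "n < p") auto
    have "a \<le> p" using p as by auto
    then have "a \<le> shash h (T0 p)" using shge nf by blast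
    moreover have "shash h (T0 p) < s" using p inv_I1[OF I nf] by auto
    ultimately show "p \<in> ?KS" using pn nfkey[OF nf] by auto
  qed
  have "card ({a..<s} \<union> ?XS) = (s - a) + Xc s T0"
    unfolding Xc_def by (subst card_Un_disjoint) auto
  moreover have "card ({a..<s} \<union> ?XS) \<le> card ?KS"
    by (rule card_mono[OF _ sub]) simp
  ultimately show ?thesis using Ksum[of "{a..<s}" T0] a1 as by auto
qed


definition good :: "nat \<Rightarrow> nat \<Rightarrow> bool" where
  "good t s \<longleftrightarrow> (\<exists>r \<tau>. 1 \<le> r \<and> r \<le> s \<and> mono \<tau> \<and> (\<forall>x. \<tau> x \<le> t) \<and>
       (s - r) + Xc s (st t) \<le> (\<Sum>x\<in>{r..<s}. Kc x (st (\<tau> x))))"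

lemma cross_step:
  assumes t: "t < length S" and s1: "1 \<le> s" and IH: "\<forall>s. 1 \<le> s \<longrightarrow> good t s"
    and cr: "cross s (S ! t) (pks ! t)"
  shows "good (Suc t) s"
proof -
  define T where "T = st t"
  define T' where "T' = st (Suc t)"
  have I: "inv T" unfolding T_def using inv_st t by simp
  have stp: "step n h T (S ! t) = Some (T', pks ! t)" unfolding T_def T'_def using st_step[OF t] .
  obtain u where Su: "S ! t = Ins u" using cr unfolding cross_def by (cases "S ! t") auto
  define y where "y = h u"
  obtain pk where pk: "pks ! t = Some pk" "s \<le> pk" and ys: "y < s"
    using cr Su unfolding cross_def y_def by auto
  obtain j k where j1: "y \<le> j" and jk: "j \<le> k" and kn: "k \<le> n"
    and jl: "\<forall>p. y \<le> p \<longrightarrow> p < j \<longrightarrow> T p \<noteq> Free \<and> shash h (T p) < y"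
    and jj: "T j = Free \<or> y \<le> shash h (T j)"
    and kl: "\<forall>q. j \<le> q \<longrightarrow> q < k \<longrightarrow> is_key (T q)" and kk: "\<not> is_key (T k)"
    and T'd: "T' = (\<lambda>p. if p = j then Key u else if j < p \<and> p \<le> k then T (p - 1) else T p)"
    and pkd: "pks ! t = Some (case T k of Tomb x \<Rightarrow> h x | _ \<Rightarrow> k)"
    and nk: "\<forall>p. T p \<noteq> Key u"
    unfolding y_def by (rule step_ins[OF stp[unfolded Su]])
  have y1: "1 \<le> y" using hpos unfolding y_def by blast
  have klnf: "\<And>q. j \<le> q \<Longrightarrow> q < k \<Longrightarrow> T q \<noteq> Free" using kl is_key_nf by blast
  have sk: "s \<le> k"
  proof (cases "T k")
    case Free then show ?thesis using pk pkd by simp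
  next
    case (Key x) then show ?thesis using kk by simp
  next
    case (Tomb w)
    then have "h w \<le> k" using inv_I1[OF I, of k] by simp
    then show ?thesis using pk pkd Tomb by simp
  qed
  have beyond: "\<And>p. k < p \<Longrightarrow> T p \<noteq> Free \<Longrightarrow> s \<le> shash h (T p)"
  proof -
    fix p assume kp: "k < p" and nf: "T p \<noteq> Free"
    show "s \<le> shash h (T p)"
    proof (cases "shash h (T p) \<le> k")
      case False then show ?thesis using sk by simp
    next
      case True
      have nfk: "T k \<noteq> Free" using inv_I1b[OF I nf True] kp by simp
      then obtain w where w: "T k = Tomb w" using kk by (cases "T k") auto
      then have "s \<le> h w" using pk pkd by simp
      also have "h w = shash h (T k)" using w by simp
      also have "\<dots> \<le> shash h (T p)"
      proof (rule inv_sorted[OF I], use kp in simp, intro allI impI)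
        fix r assume "k \<le> r" "r \<le> p"
        then show "T r \<noteq> Free" using inv_I1b[OF I nf, of r] True by simp
      qed
      finally show ?thesis .
    qed
  qed
  have inrange: "\<And>p. j \<le> p \<Longrightarrow> p \<le> k \<Longrightarrow> is_key (T' p) \<and> y \<le> shash h (T' p) \<and> shash h (T' p) \<le> p"
  proof -
    fix p assume jp: "j \<le> p" and pk': "p \<le> k"
    show "is_key (T' p) \<and> y \<le> shash h (T' p) \<and> shash h (T' p) \<le> p"
    proof (cases "p = j")
      case True then show ?thesis using j1 unfolding T'd y_def by simp
    next
      case False
      then have e: "T' p = T (p - 1)" unfolding T'd using jp pk' by simp
      have r1: "j \<le> p - 1" "p - 1 < k" using False jp pk' by auto
      have key: "is_key (T (p - 1))" using kl r1 by blast
      have "T j \<noteq> Free" using klnf r1 by simp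
      then have "y \<le> shash h (T j)" using jj by simp
      also have "\<dots> \<le> shash h (T (p - 1))"
      proof (rule inv_sorted[OF I r1(1)], intro allI impI)
        fix r assume "j \<le> r" "r \<le> p - 1"
        then show "T r \<noteq> Free" using klnf r1 by simp
      qed
      finally have "y \<le> shash h (T (p - 1))" .
      moreover have "shash h (T (p - 1)) \<le> p - 1" using inv_I1[OF I] key is_key_nf by blast
      ultimately show ?thesis using e key by simp
    qed
  qed
  obtain r \<tau> where r1: "1 \<le> r" and ry: "r \<le> y" and mt: "mono \<tau>" and tt: "\<forall>x. \<tau> x \<le> t"
    and ih: "(y - r) + Xc y T \<le> (\<Sum>x\<in>{r..<y}. Kc x (st (\<tau> x)))"
    using IH y1 unfolding good_def T_def by blast
  define \<tau>' where "\<tau>' x = (if x < y then \<tau> x else Suc t)" for x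
  have mt': "mono \<tau>'"
  proof (rule monoI)
    fix x x' :: nat assume "x \<le> x'"
    then show "\<tau>' x \<le> \<tau>' x'" unfolding \<tau>'_def using mt tt
      by (auto simp: mono_def le_Suc_eq)
  qed
  have tt': "\<forall>x. \<tau>' x \<le> Suc t" unfolding \<tau>'_def using tt le_Suc_eq by auto
  have sumsplit: "(\<Sum>x\<in>{r..<s}. Kc x (st (\<tau>' x))) = (\<Sum>x\<in>{r..<y}. Kc x (st (\<tau> x))) + (\<Sum>x\<in>{y..<s}. Kc x T')"
  proof -
    have "(\<Sum>x\<in>{r..<s}. Kc x (st (\<tau>' x))) = (\<Sum>x\<in>{r..<y}. Kc x (st (\<tau>' x))) + (\<Sum>x\<in>{y..<s}. Kc x (st (\<tau>' x)))"
      using ry ys by (simp add: sum.atLeastLessThan_concat)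
    moreover have "(\<Sum>x\<in>{r..<y}. Kc x (st (\<tau>' x))) = (\<Sum>x\<in>{r..<y}. Kc x (st (\<tau> x)))"
      by (rule sum.cong) (auto simp: \<tau>'_def)
    moreover have "(\<Sum>x\<in>{y..<s}. Kc x (st (\<tau>' x))) = (\<Sum>x\<in>{y..<s}. Kc x T')"
      by (rule sum.cong) (auto simp: \<tau>'_def T'_def)
    ultimately show ?thesis by simp
  qed
  have Xy: "j - y \<le> Xc y T"
  proof -
    have "{y..<j} \<subseteq> {p. p \<le> n \<and> y \<le> p \<and> T p \<noteq> Free \<and> shash h (T p) < y}"
      using jl jk kn by auto
    then have "card {y..<j} \<le> Xc y T" unfolding Xc_def by (rule card_mono[rotated]) simp
    then show ?thesis by simp
  qed
  define W where "W = {p. p \<le> n \<and> s \<le> p \<and> j \<le> p \<and> T' p \<noteq> Free \<and> shash h (T' p) < s}"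
  have finW: "finite W" unfolding W_def by simp
  have Wk: "\<And>p. p \<in> W \<Longrightarrow> p \<le> k"
  proof (rule ccontr)
    fix p assume p: "p \<in> W" "\<not> p \<le> k"
    then have "T' p = T p" unfolding T'd using jk by auto
    then have a: "T p \<noteq> Free" "shash h (T p) < s" using p unfolding W_def by auto
    have "k < p" using p(2) by simp
    then have "s \<le> shash h (T p)" using beyond a(1) by blast
    then show False using a(2) by simp
  qed
  let ?KS = "{p. p \<le> n \<and> is_key (T' p) \<and> shash h (T' p) \<in> {y..<s}}"
  have sub: "{j..<s} \<union> W \<subseteq> ?KS"
  proof
    fix p assume p: "p \<in> {j..<s} \<union> W"
    then have jp: "j \<le> p" and pk': "p \<le> k" using Wk sk unfolding W_def by auto
    have pn: "p \<le> n" using pk' kn by simp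
    have "shash h (T' p) < s"
    proof (cases "p < s")
      case True then show ?thesis using inrange[OF jp pk'] by simp
    next
      case False then show ?thesis using p unfolding W_def by auto
    qed
    then show "p \<in> ?KS" using inrange[OF jp pk'] pn by auto
  qed
  have cKS: "(s - j) + card W \<le> card ?KS"
  proof -
    have "card ({j..<s} \<union> W) = (s - j) + card W"
      by (subst card_Un_disjoint) (auto simp: W_def finW)
    moreover have "card ({j..<s} \<union> W) \<le> card ?KS" by (rule card_mono[OF _ sub]) simp
    ultimately show ?thesis by simp
  qed
  have cX: "Xc s T' \<le> (j - s) + card W"
  proof -
    have "{p. p \<le> n \<and> s \<le> p \<and> T' p \<noteq> Free \<and> shash h (T' p) < s} \<subseteq> {s..<j} \<union> W"
      unfolding W_def by auto
    then have "Xc s T' \<le> card ({s..<j} \<union> W)" unfolding Xc_def by (rule card_mono[rotated]) (simp add: finW)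
    also have "\<dots> \<le> card {s..<j} + card W" by (rule card_Un_le)
    finally show ?thesis by simp
  qed
  have KS: "(\<Sum>x\<in>{y..<s}. Kc x T') = card ?KS" using Ksum[of "{y..<s}" T'] by simp
  have "(s - r) + Xc s T' \<le> (\<Sum>x\<in>{r..<s}. Kc x (st (\<tau>' x)))"
    unfolding sumsplit KS using ih Xy cKS cX ry j1 ys by linarith
  then show ?thesis unfolding good_def T'_def
    using r1 ry ys mt' tt' by (intro exI[of _ r] exI[of _ \<tau>']) auto
qed

lemma claim: "t \<le> length S \<Longrightarrow> \<forall>s. 1 \<le> s \<longrightarrow> good t s"
proof (induction t)
  case 0
  show ?case
  proof (intro allI impI)
    fix s :: nat assume s1: "1 \<le> s"
    obtain r where "1 \<le> r" "r \<le> s" "(s - r) + Xc s T0 \<le> (\<Sum>x\<in>{r..<s}. Kc x T0)"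
      using claim_base[OF s1] by blast
    then show "good 0 s" unfolding good_def
      by (intro exI[of _ r] exI[of _ "\<lambda>_. 0"]) (auto simp: st0 mono_def)
  qed
next
  case (Suc t)
  then have t: "t < length S" and IH: "\<forall>s. 1 \<le> s \<longrightarrow> good t s" by auto
  show ?case
  proof (intro allI impI)
    fix s :: nat assume s1: "1 \<le> s"
    show "good (Suc t) s"
    proof (cases "cross s (S ! t) (pks ! t)")
      case True then show ?thesis using cross_step[OF t s1 IH] by simp
    next
      case False
      have "Xc s (st (Suc t)) = Xc s (st t)"
        using X_step[OF inv_st st_step[OF t]] t False by simp
      moreover obtain r \<tau> where "1 \<le> r \<and> r \<le> s \<and> mono \<tau> \<and> (\<forall>x. \<tau> x \<le> t) \<and>
          (s - r) + Xc s (st t) \<le> (\<Sum>x\<in>{r..<s}. Kc x (st (\<tau> x)))"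
        using IH s1 unfolding good_def by blast
      ultimately show ?thesis unfolding good_def
        by (intro exI[of _ r] exI[of _ \<tau>]) (auto simp: le_Suc_eq)
    qed
  qed
qed


lemma final:
  assumes s1: "1 \<le> s"
  shows "\<exists>r. 1 \<le> r \<and> r \<le> s \<and> int (crossing h S pks s) \<le> interval_surplus n h T0 S {r..s - 1}"
proof -
  define L where "L = length S"
  obtain r \<tau> where r1: "1 \<le> r" and rs: "r \<le> s" and mt: "mono \<tau>" and tL: "\<forall>x. \<tau> x \<le> L"
    and main: "(s - r) + Xc s (st L) \<le> (\<Sum>x\<in>{r..<s}. Kc x (st (\<tau> x)))"
    using claim[of L] s1 unfolding good_def L_def by auto
  have P: "{r..s - 1} = {r..<s}" using s1 by auto
  define hv where "hv v = h (opkey (S ! v))" for v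
  define S' where "S' = {v. v < L \<and> hv v \<in> {r..<s} \<and> v < \<tau> (hv v)}"
  have finS': "finite S'" unfolding S'_def by simp
  have crs: "crossing h S pks s = card {v. v < L \<and> cross s (S ! v) (pks ! v)}"
    unfolding crossing_def cross_def L_def by simp
  have XL: "Xc s (st L) = Xc s T0 + crossing h S pks s"
    using X_acc[of L s] crs unfolding L_def by simp
  have dc: "downward_closed h S {r..s - 1} S'"
    unfolding downward_closed_def S_of_def P
  proof (intro conjI ballI impI)
    show "S' \<subseteq> {t. t < length S \<and> h (opkey (S ! t)) \<in> {r..<s}}"
      unfolding S'_def hv_def L_def by auto
  next
    fix u v assume u: "u \<in> S'" and v: "v \<in> {t. t < length S \<and> h (opkey (S ! t)) \<in> {r..<s}}"
      and vu: "v < u" and hh: "h (opkey (S ! u)) \<le> h (opkey (S ! v))"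
    have "\<tau> (hv u) \<le> \<tau> (hv v)" using mt hh unfolding hv_def by (simp add: mono_def)
    then show "v \<in> S'" using u v vu unfolding S'_def hv_def L_def by auto
  qed
  have fin_dc: "finite {S'. downward_closed h S {r..s - 1} S'}"
  proof (rule finite_subset)
    show "{S'. downward_closed h S {r..s - 1} S'} \<subseteq> Pow (S_of h S {r..s - 1})"
      unfolding downward_closed_def by auto
    show "finite (Pow (S_of h S {r..s - 1}))" unfolding S_of_def by simp
  qed
  have maxge: "set_surplus S S' \<le> Max (set_surplus S ` {S'. downward_closed h S {r..s - 1} S'})"
    by (rule Max_ge) (use fin_dc dc in auto)
  define g where "g v = (if is_ins (S ! v) then 1 else -1 :: int)" for v
  have e1: "int (card {t\<in>S'. is_ins (S ! t)}) - int (card {t\<in>S'. \<not> is_ins (S ! t)}) = (\<Sum>v\<in>S'. g v)"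
  proof -
    have "(\<Sum>v\<in>S'. g v) = (\<Sum>v\<in>S' \<inter> {v. is_ins (S ! v)}. 1) + (\<Sum>v\<in>S' \<inter> - {v. is_ins (S ! v)}. -1)"
      unfolding g_def by (rule sum.If_cases[OF finS'])
    moreover have "S' \<inter> {v. is_ins (S ! v)} = {t\<in>S'. is_ins (S ! t)}" by auto
    moreover have "S' \<inter> - {v. is_ins (S ! v)} = {t\<in>S'. \<not> is_ins (S ! t)}" by auto
    ultimately show ?thesis by simp
  qed
  have e2: "(\<Sum>v\<in>S'. g v) = (\<Sum>x\<in>{r..<s}. (\<Sum>v\<in>{v\<in>S'. hv v = x}. g v))"
    by (rule sum.group[symmetric]) (auto simp: finS' S'_def)
  have e3: "(\<Sum>v\<in>{v\<in>S'. hv v = x}. g v) = int (Kc x (st (\<tau> x))) - int (Kc x T0)" if x: "x \<in> {r..<s}" for x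
  proof -
    have "{v\<in>S'. hv v = x} = {v \<in> {..<\<tau> x}. hv v = x}"
      using x tL unfolding S'_def L_def[symmetric] by (auto intro: less_le_trans)
    then have "(\<Sum>v\<in>{v\<in>S'. hv v = x}. g v) = (\<Sum>v<\<tau> x. if hv v = x then g v else 0)"
      using sum.inter_filter[of "{..<\<tau> x}" g "\<lambda>v. hv v = x"] by simp
    also have "\<dots> = (\<Sum>v<\<tau> x. dlt x v)"
      by (rule sum.cong) (auto simp: dlt_def g_def hv_def)
    also have "\<dots> = int (Kc x (st (\<tau> x))) - int (Kc x T0)"
      using K_acc[of "\<tau> x" x] tL unfolding L_def by simp
    finally show ?thesis .
  qed
  have surp: "(\<Sum>x\<in>{r..<s}. int (Kc x (st (\<tau> x)))) - (\<Sum>x\<in>{r..<s}. int (Kc x T0)) \<le> set_surplus S S'"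
  proof -
    have "(\<Sum>x\<in>{r..<s}. int (Kc x (st (\<tau> x)))) - (\<Sum>x\<in>{r..<s}. int (Kc x T0))
        = (\<Sum>x\<in>{r..<s}. int (Kc x (st (\<tau> x))) - int (Kc x T0))"
      by (simp add: sum_subtractf)
    also have "\<dots> = (\<Sum>v\<in>S'. g v)" using e2 e3 by simp
    also have "\<dots> \<le> set_surplus S S'" unfolding set_surplus_def e1[symmetric] by simp
    finally show ?thesis .
  qed
  have I0: "inv T0" using inv_initial[OF init] .
  define F where "F = card {p \<in> {r..s - 1}. p \<in> {1..n} \<and> T0 p = Free}"
  have K0: "(\<Sum>x\<in>{r..<s}. Kc x T0) + F \<le> (s - r) + Xc s T0"
  proof -
    let ?KS = "{p. p \<le> n \<and> is_key (T0 p) \<and> shash h (T0 p) \<in> {r..<s}}"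
    let ?NP = "{p \<in> {r..<s}. T0 p \<noteq> Free}"
    let ?FP = "{p \<in> {r..<s}. p \<in> {1..n} \<and> T0 p = Free}"
    let ?XS = "{p. p \<le> n \<and> s \<le> p \<and> T0 p \<noteq> Free \<and> shash h (T0 p) < s}"
    have "?KS \<subseteq> ?NP \<union> ?XS"
    proof
      fix p assume p: "p \<in> ?KS"
      then have nf: "T0 p \<noteq> Free" using is_key_nf by blast
      have "shash h (T0 p) \<le> p" using inv_I1[OF I0 nf] .
      then show "p \<in> ?NP \<union> ?XS" using p nf by auto
    qed
    then have "card ?KS \<le> card (?NP \<union> ?XS)" by (rule card_mono[rotated]) simp
    also have "\<dots> \<le> card ?NP + card ?XS" by (rule card_Un_le)
    finally have a: "card ?KS \<le> card ?NP + Xc s T0" unfolding Xc_def .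
    have "card ?NP + card ?FP = card (?NP \<union> ?FP)" by (rule card_Un_disjoint[symmetric]) auto
    also have "\<dots> \<le> card {r..<s}" by (rule card_mono) auto
    finally have b: "card ?NP + card ?FP \<le> s - r" by simp
    have "F = card ?FP" unfolding F_def P ..
    then show ?thesis using a b Ksum[of "{r..<s}" T0] by simp
  qed
  have "int (crossing h S pks s) \<le> set_surplus S S' - int F"
  proof -
    have m: "int (s - r) + int (Xc s T0) + int (crossing h S pks s) \<le> (\<Sum>x\<in>{r..<s}. int (Kc x (st (\<tau> x))))"
      using main XL by (simp flip: of_nat_sum)
    have k: "(\<Sum>x\<in>{r..<s}. int (Kc x T0)) + int F \<le> int (s - r) + int (Xc s T0)"
      using K0 by (simp flip: of_nat_sum)
    show ?thesis using m k surp by linarith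
  qed
  then have "int (crossing h S pks s) \<le> interval_surplus n h T0 S {r..s - 1}"
    unfolding interval_surplus_def F_def[symmetric] using maxge by linarith
  then show ?thesis using r1 rs by blast
qed

end

theorem mainTheorem7:
  fixes n :: nat and h :: "'k \<Rightarrow> nat" and T0 :: "'k table"
    and S :: "'k op list" and pks :: "nat option list" and s :: nat
  assumes hash_range: "\<forall>k. 1 \<le> h k \<and> h k \<le> n"
    and init: "wf_initial n h T0"
    and exec: "run n h T0 S = Some pks"
    and s_range: "s \<in> {1..n}"
  shows "\<exists>r. 1 \<le> r \<and> r \<le> s \<and>
           int (crossing h S pks s) \<le> interval_surplus n h T0 S {r..s - 1}"
proof -
  interpret lpr n h T0 S pks
    by unfold_locales (use hash_range init exec in auto)
  show ?thesis using final s_range by auto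
qed

end
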